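(* Let $M$ be a nonderogatory $d\times d$ complex matrix with minimal polynomial $\mathbf p$, and let $\mathbf p_+,\mathbf p_-,\boldsymbol\chi\in\mathbb C[X]$ be such that $\mathbf p_+\mathbf p_-$ divides $\mathbf p$ and $\boldsymbol\chi$ is relatively prime to $\mathbf p$. Then $\mathfrak B(\mathbf p_+,\mathbf p_-,\boldsymbol\chi)$ is a commutative algebra of block Toeplitz matrices (a linear subspace of $\mathcal T_{n,d}$ closed under multiplication and commutative).
   Context: A nonderogatory matrix is one whose minimal polynomial equals its characteristic polynomial; $\mathcal P(M)$ denotes the algebra of polynomials in $M$. With $\mathbf q=\mathbf p/(\mathbf p_+\mathbf p_-)$, $\mathfrak B(\mathbf p_+,\mathbf p_-,\boldsymbol\chi)$ is the set of $n\times n$ block Toeplitz matrices $A=(A_{i-j})_{i,j=0}^{n-1}$ such that (a) $A_i\in\mathcal P(M)$ for all $-(n-1)\le i\le n-1$; (b)–(c) for each $i=1,\dots,n-1$ there exist polynomials $\mathbf a_i,\mathbf a_{i-n}\in\mathbb C[X]$ with $A_i=\mathbf p_+(M)\mathbf a_i(M)$, $A_{i-n}=\mathbf p_-(M)\mathbf a_{i-n}(M)$, and $\mathbf q$ divides $\mathbf a_i-\boldsymbol\chi\,\mathbf a_{i-n}$. *)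

theory Defs
  imports "Jordan_Normal_Form.Char_Poly"
begin

definition poly_mat :: "'a :: comm_ring_1 poly \<Rightarrow> 'a mat \<Rightarrow> 'a mat" where
  "poly_mat p M = mat (dim_row M) (dim_row M)
     (\<lambda>(i,j). \<Sum>k\<le>degree p. coeff p k * (M ^\<^sub>m k) $$ (i,j))"

definition poly_algebra :: "'a :: comm_ring_1 mat \<Rightarrow> 'a mat set" where
  "poly_algebra M = {poly_mat a M | a. True}"

definition is_min_poly :: "'a :: field mat \<Rightarrow> 'a poly \<Rightarrow> bool" where
  "is_min_poly M p \<longleftrightarrow> monic p \<and> poly_mat p M = 0\<^sub>m (dim_row M) (dim_row M) \<and>
     (\<forall>q. poly_mat q M = 0\<^sub>m (dim_row M) (dim_row M) \<longrightarrow> p dvd q)"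

definition nonderogatory :: "'a :: field mat \<Rightarrow> bool" where
  "nonderogatory M \<longleftrightarrow> is_min_poly M (char_poly M)"

definition block_toeplitz :: "nat \<Rightarrow> nat \<Rightarrow> (int \<Rightarrow> 'a mat) \<Rightarrow> 'a mat" where
  "block_toeplitz n d A = mat (n*d) (n*d)
     (\<lambda>(r,c). A (int (r div d) - int (c div d)) $$ (r mod d, c mod d))"

definition toeplitz_space :: "nat \<Rightarrow> nat \<Rightarrow> 'a mat set" where
  "toeplitz_space n d = {block_toeplitz n d A | A. \<forall>i. A i \<in> carrier_mat d d}"

definition frakB :: "nat \<Rightarrow> complex mat \<Rightarrow> complex poly \<Rightarrow> complex poly \<Rightarrow> complex poly \<Rightarrow> complex poly
     \<Rightarrow> complex mat set" where
  "frakB n M p pp pm chi =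
     {block_toeplitz n (dim_row M) A | A.
        (\<forall>i::int. - (int n - 1) \<le> i \<and> i \<le> int n - 1 \<longrightarrow> A i \<in> poly_algebra M) \<and>
        (\<forall>i::int. 1 \<le> i \<and> i \<le> int n - 1 \<longrightarrow>
           (\<exists>ai ain. A i = poly_mat (pp * ai) M \<and> A (i - int n) = poly_mat (pm * ain) M \<and>
                     (p div (pp * pm)) dvd (ai - chi * ain)))}"

end

theory Submission
  imports Defs
begin


lemma pm_carrier: "M \<in> carrier_mat d d \<Longrightarrow> poly_mat a M \<in> carrier_mat d d"
  unfolding poly_mat_def by auto

lemma pm_dim[simp]: "dim_row (poly_mat a M) = dim_row M" "dim_col (poly_mat a M) = dim_row M"
  unfolding poly_mat_def by auto

lemma pm_entry:
  assumes M: "M \<in> carrier_mat d d" and deg: "degree a \<le> N" and ij: "i < d" "j < d"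
  shows "poly_mat a M $$ (i,j) = (\<Sum>k\<le>N. coeff a k * (M ^\<^sub>m k) $$ (i,j))"
proof -
  have "poly_mat a M $$ (i,j) = (\<Sum>k\<le>degree a. coeff a k * (M ^\<^sub>m k) $$ (i,j))"
    using M ij unfolding poly_mat_def by auto
  also have "\<dots> = (\<Sum>k\<le>N. coeff a k * (M ^\<^sub>m k) $$ (i,j))"
    by (rule sum.mono_neutral_left) (use deg in \<open>auto simp: coeff_eq_0\<close>)
  finally show ?thesis .
qed

lemma pm_add: assumes M: "M \<in> carrier_mat d d"
  shows "poly_mat (a + b) M = poly_mat a M + poly_mat b M"
proof (rule eq_matI)
  fix i j assume "i < dim_row (poly_mat a M + poly_mat b M)" "j < dim_col (poly_mat a M + poly_mat b M)"
  hence ij: "i < d" "j < d" using pm_carrier[OF M] M by auto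
  let ?N = "max (degree a) (degree b)"
  have "degree (a+b) \<le> ?N" by (rule degree_add_le) auto
  then show "poly_mat (a + b) M $$ (i,j) = (poly_mat a M + poly_mat b M) $$ (i,j)"
    using ij pm_carrier[OF M, of a] pm_carrier[OF M, of b]
    by (simp add: carrier_matD[OF M] pm_entry[OF M _ ij, of _ ?N] distrib_right sum.distrib)
qed (use pm_carrier[OF assms] in auto)

lemma pm_smult: assumes M: "M \<in> carrier_mat d d"
  shows "poly_mat (Polynomial.smult c a) M = c \<cdot>\<^sub>m poly_mat a M"
proof (rule eq_matI)
  fix i j assume "i < dim_row (c \<cdot>\<^sub>m poly_mat a M)" "j < dim_col (c \<cdot>\<^sub>m poly_mat a M)"
  hence ij: "i < d" "j < d" using pm_carrier[OF M] M by auto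
  have "degree (Polynomial.smult c a) \<le> degree a" by (rule degree_smult_le)
  then show "poly_mat (Polynomial.smult c a) M $$ (i,j) = (c \<cdot>\<^sub>m poly_mat a M) $$ (i,j)"
    using ij pm_carrier[OF M, of a]
    by (simp add: carrier_matD[OF M] pm_entry[OF M _ ij, of _ "degree a"] sum_distrib_left mult.assoc)
qed (use pm_carrier[OF assms] in auto)

lemma pm_zero: assumes M: "M \<in> carrier_mat d d"
  shows "poly_mat 0 M = 0\<^sub>m d d"
  using M unfolding poly_mat_def by (intro eq_matI) auto

lemma pm_horner: assumes M: "M \<in> carrier_mat d d"
  shows "poly_mat (pCons c a) M = c \<cdot>\<^sub>m 1\<^sub>m d + poly_mat a M * M"
proof (rule eq_matI)
  fix i j assume "i < dim_row (c \<cdot>\<^sub>m 1\<^sub>m d + poly_mat a M * M)" "j < dim_col (c \<cdot>\<^sub>m 1\<^sub>m d + poly_mat a M * M)"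
  hence ij: "i < d" "j < d" using pm_carrier[OF M] M by auto
  have deg: "degree (pCons c a) \<le> Suc (degree a)" by (rule degree_pCons_le)
  have "poly_mat (pCons c a) M $$ (i,j) = (\<Sum>k\<le>Suc (degree a). coeff (pCons c a) k * (M ^\<^sub>m k) $$ (i,j))"
    by (rule pm_entry[OF M deg ij])
  also have "\<dots> = c * (1\<^sub>m d) $$ (i,j) + (\<Sum>k\<le>degree a. coeff a k * (M ^\<^sub>m Suc k) $$ (i,j))"
    using M by (subst sum.atMost_Suc_shift) (simp add: carrier_matD[OF M] pow_mat.simps(1) del: pow_mat.simps(2) sum.atMost_Suc)
  also have "(\<Sum>k\<le>degree a. coeff a k * (M ^\<^sub>m Suc k) $$ (i,j))
     = (\<Sum>k\<le>degree a. \<Sum>l<d. coeff a k * ((M ^\<^sub>m k) $$ (i,l) * M $$ (l,j)))"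
    using M ij by (simp add: scalar_prod_def sum_distrib_left lessThan_atLeast0)
  also have "\<dots> = (\<Sum>l<d. (\<Sum>k\<le>degree a. coeff a k * (M ^\<^sub>m k) $$ (i,l)) * M $$ (l,j))"
    by (subst sum.swap) (simp add: sum_distrib_right mult.assoc)
  also have "\<dots> = (poly_mat a M * M) $$ (i,j)"
    using M ij pm_carrier[OF M, of a]
    by (simp add: scalar_prod_def lessThan_atLeast0 pm_entry[OF M order.refl])
  finally show "poly_mat (pCons c a) M $$ (i,j) = (c \<cdot>\<^sub>m 1\<^sub>m d + poly_mat a M * M) $$ (i,j)"
    using ij M pm_carrier[OF M, of a] by simp
qed (use pm_carrier[OF assms] assms in auto)

lemma pm_one: assumes M: "M \<in> carrier_mat d d"
  shows "poly_mat 1 M = 1\<^sub>m d"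
proof -
  have "poly_mat 1 M = poly_mat (pCons 1 0) M" by (simp add: one_pCons)
  also have "\<dots> = 1\<^sub>m d"
    unfolding pm_horner[OF M] pm_zero[OF M] using M by (intro eq_matI) auto
  finally show ?thesis .
qed

lemma pm_commM: assumes M: "M \<in> carrier_mat d d"
  shows "poly_mat a M * M = M * poly_mat a M"
proof (induction a rule: pCons_induct)
  case 0 then show ?case using M by (simp add: pm_zero[OF M])
next
  case (pCons c a)
  have C: "poly_mat a M \<in> carrier_mat d d" by (rule pm_carrier[OF M])
  have "poly_mat (pCons c a) M * M = c \<cdot>\<^sub>m M + poly_mat a M * M * M"
    unfolding pm_horner[OF M] using M C
    by (simp add: add_mult_distrib_mat[of _ d d] mult_smult_assoc_mat[of _ d d])
  also have "\<dots> = c \<cdot>\<^sub>m M + M * (poly_mat a M * M)"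
    using pCons.IH M C by simp
  also have "\<dots> = M * (c \<cdot>\<^sub>m 1\<^sub>m d) + M * (poly_mat a M * M)"
    using M by (simp add: mult_smult_distrib[OF M one_carrier_mat])
  also have "\<dots> = M * poly_mat (pCons c a) M"
    unfolding pm_horner[OF M] by (rule mult_add_distrib_mat[OF M smult_carrier_mat[OF one_carrier_mat] mult_carrier_mat[OF C M], symmetric])
  finally show ?case .
qed

lemma pm_mult: assumes M: "M \<in> carrier_mat d d"
  shows "poly_mat (a * b) M = poly_mat a M * poly_mat b M"
proof (induction a rule: pCons_induct)
  case 0 then show ?case using M by (simp add: pm_zero[OF M])
next
  case (pCons c a)
  have C: "\<And>x. poly_mat x M \<in> carrier_mat d d" by (rule pm_carrier[OF M])
  have "poly_mat (pCons c a * b) M = c \<cdot>\<^sub>m poly_mat b M + poly_mat (a * b) M * M"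
    by (simp add: pm_add[OF M] pm_smult[OF M] pm_horner[OF M, of 0] pm_zero[OF M])
      (intro eq_matI, use M C in \<open>auto simp: carrier_matD\<close>)
  also have "\<dots> = c \<cdot>\<^sub>m poly_mat b M + poly_mat a M * (M * poly_mat b M)"
    using pCons.IH M C by (simp add: pm_commM[OF M] assoc_mult_mat[OF C C M])
  also have "\<dots> = (c \<cdot>\<^sub>m 1\<^sub>m d) * poly_mat b M + (poly_mat a M * M) * poly_mat b M"
  proof -
    have e1: "(c \<cdot>\<^sub>m 1\<^sub>m d) * poly_mat b M = c \<cdot>\<^sub>m poly_mat b M"
      using C[of b] by (simp add: mult_smult_assoc_mat[OF one_carrier_mat C] left_mult_one_mat[OF C])
    have e2: "(poly_mat a M * M) * poly_mat b M = poly_mat a M * (M * poly_mat b M)"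
      by (rule assoc_mult_mat[OF C M C])
    show ?thesis by (simp only: e1 e2)
  qed
  also have "\<dots> = poly_mat (pCons c a) M * poly_mat b M"
    unfolding pm_horner[OF M] by (rule add_mult_distrib_mat[OF smult_carrier_mat[OF one_carrier_mat] mult_carrier_mat[OF C M] C, symmetric])
  finally show ?case .
qed

lemma pm_comm: assumes M: "M \<in> carrier_mat d d"
  shows "poly_mat a M * poly_mat b M = poly_mat b M * poly_mat a M"
  by (metis M mult.commute pm_mult)

lemma pm_uminus: assumes M: "M \<in> carrier_mat d d"
  shows "poly_mat (- a) M = - poly_mat a M"
proof -
  have "poly_mat (- a) M = poly_mat (Polynomial.smult (-1) a) M" by simp
  also have "\<dots> = - poly_mat a M" unfolding pm_smult[OF M]
    by (intro eq_matI) auto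
  finally show ?thesis .
qed

lemma pm_sum_entry: assumes M: "M \<in> carrier_mat d d" and ij: "i < d" "j < d"
  shows "poly_mat (\<Sum>k\<in>K. f k) M $$ (i,j) = (\<Sum>k\<in>K. poly_mat (f k) M $$ (i,j))"
proof (induction K rule: infinite_finite_induct)
  case (infinite A) then show ?case using pm_zero[OF M] ij by simp
next
  case empty then show ?case using pm_zero[OF M] ij by simp
next
  case (insert x F) then show ?case using pm_add[OF M] pm_carrier[OF M] ij by (simp add: carrier_matD[OF M])
qed

lemma pm_dvd_eq: assumes M: "M \<in> carrier_mat d d" and mp: "is_min_poly M p"
  and dv: "p dvd (u - v)"
  shows "poly_mat u M = poly_mat v M"
proof -
  obtain r where r: "u - v = p * r" using dv by blast
  have u: "u = v + p * r" using r by (simp add: algebra_simps)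
  have "poly_mat p M = 0\<^sub>m d d" using mp M unfolding is_min_poly_def by auto
  then show ?thesis unfolding u pm_add[OF M] pm_mult[OF M] using M pm_carrier[OF M] by simp
qed

lemma pm_eq_dvd: assumes M: "M \<in> carrier_mat d d" and mp: "is_min_poly M p"
  and eq: "poly_mat u M = poly_mat v M"
  shows "p dvd (u - v)"
proof -
  have "poly_mat (u - v) M = poly_mat u M + - poly_mat v M"
    by (simp add: pm_add[OF M, symmetric] pm_uminus[OF M, symmetric])
  also have "\<dots> = 0\<^sub>m d d" unfolding eq using pm_carrier[OF M] by (intro eq_matI) (auto simp: carrier_matD[OF M])
  finally show ?thesis using mp M unfolding is_min_poly_def by auto
qed



definition good :: "'a::field poly \<Rightarrow> 'a poly \<Rightarrow> 'a poly \<Rightarrow> 'a poly \<Rightarrow> 'a poly \<Rightarrow> 'a poly \<Rightarrow> bool" where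
  "good p pp pm chi u v \<longleftrightarrow> pp dvd u \<and> pm dvd v \<and> p dvd (pm*u - chi*pp*v)"

definition goodseq :: "nat \<Rightarrow> 'a::field poly \<Rightarrow> 'a poly \<Rightarrow> 'a poly \<Rightarrow> 'a poly \<Rightarrow> (int \<Rightarrow> 'a poly) \<Rightarrow> bool" where
  "goodseq n p pp pm chi al \<longleftrightarrow> (\<forall>i::int. 1 \<le> i \<and> i \<le> int n - 1 \<longrightarrow> good p pp pm chi (al i) (al (i - int n)))"

definition W :: "nat \<Rightarrow> (int \<Rightarrow> 'a::comm_ring_1) \<Rightarrow> (int \<Rightarrow> 'a) \<Rightarrow> int \<Rightarrow> int \<Rightarrow> 'a" where
  "W n al be m a = (\<Sum>k<n. al (a + int k) * be (m - (a + int k)))"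

definition gam :: "nat \<Rightarrow> (int \<Rightarrow> 'a::comm_ring_1) \<Rightarrow> (int \<Rightarrow> 'a) \<Rightarrow> int \<Rightarrow> 'a" where
  "gam n al be m = W n al be m (min 0 m)"

lemma cross:
  assumes ga: "goodseq n p pp pm chi al" and gb: "goodseq n p pp pm chi be"
    and s: "1 \<le> s" "s \<le> int n - 1" and t: "1 \<le> t" "t \<le> int n - 1"
  shows "p dvd (al s * be (t - int n) - al (s - int n) * be t)"
proof -
  have A: "good p pp pm chi (al s) (al (s - int n))" using ga s unfolding goodseq_def by auto
  have B: "good p pp pm chi (be t) (be (t - int n))" using gb t unfolding goodseq_def by auto
  obtain a a' b b' where a: "al s = pp * a" and a': "al (s - int n) = pm * a'"
    and b: "be t = pp * b" and b': "be (t - int n) = pm * b'"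
    using A B unfolding good_def by (auto elim!: dvdE)
  have X: "p dvd pp*pm*(a - chi*a')" using A unfolding good_def a a'
    by (simp add: algebra_simps)
  have Y: "p dvd pp*pm*(b - chi*b')" using B unfolding good_def b b'
    by (simp add: algebra_simps)
  have "al s * be (t - int n) - al (s - int n) * be t
       = (pp*pm*(a - chi*a')) * b' - a' * (pp*pm*(b - chi*b'))"
    unfolding a a' b b' by (simp add: algebra_simps)
  then show ?thesis using X Y by (simp add: dvd_diff dvd_mult2 dvd_mult)
qed

lemma W_step:
  assumes "n = Suc n'"
  shows "W n al be m (a + 1) = W n al be m a - al a * be (m - a) + al (a + int n) * be (m - (a + int n))"
proof -
  have "W n al be m (a + 1) = (\<Sum>k<n'. al (a + int (Suc k)) * be (m - (a + int (Suc k)))) + al (a + int n) * be (m - (a + int n))"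
    unfolding W_def assms sum.lessThan_Suc by (simp add: algebra_simps)
  moreover have "W n al be m a = al a * be (m - a) + (\<Sum>k<n'. al (a + int (Suc k)) * be (m - (a + int (Suc k))))"
    unfolding W_def assms sum.lessThan_Suc_shift by simp
  ultimately show ?thesis by simp
qed

lemma W_const_aux:
  assumes ga: "goodseq n p pp pm chi al" and gb: "goodseq n p pp pm chi be" and n: "n \<ge> 1"
    and a: "1 - int n \<le> a" "m - int n + 1 \<le> a"
  shows "a + int j \<le> 0 \<Longrightarrow> a + int j \<le> m \<Longrightarrow> p dvd (W n al be m (a + int j) - W n al be m a)"
proof (induction j)
  case 0 then show ?case by simp
next
  case (Suc j)
  let ?a = "a + int j"
  obtain n' where n': "n = Suc n'" using n by (cases n) auto
  have step: "W n al be m (?a + 1) - W n al be m ?a = al (?a + int n) * be ((m - ?a) - int n) - al ((?a + int n) - int n) * be (m - ?a)"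
    using W_step[OF n', of al be m ?a] by (simp add: algebra_simps)
  have "p dvd (W n al be m (?a + 1) - W n al be m ?a)"
    unfolding step by (rule cross[OF ga gb]) (use Suc.prems a in auto)
  moreover have "p dvd (W n al be m ?a - W n al be m a)" using Suc by auto
  ultimately have "p dvd ((W n al be m (?a + 1) - W n al be m ?a) + (W n al be m ?a - W n al be m a))"
    by (rule dvd_add)
  then show ?case by (simp add: algebra_simps)
qed

lemma W_const:
  assumes ga: "goodseq n p pp pm chi al" and gb: "goodseq n p pp pm chi be" and n: "n \<ge> 1"
    and a: "1 - int n \<le> a" "m - int n + 1 \<le> a" "a \<le> 0" "a \<le> m"
    and b: "1 - int n \<le> b" "m - int n + 1 \<le> b" "b \<le> 0" "b \<le> m"
  shows "p dvd (W n al be m b - W n al be m a)"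
proof (cases "a \<le> b")
  case True
  then obtain j where j: "b = a + int j" by (metis zle_iff_zadd)
  show ?thesis unfolding j by (rule W_const_aux[OF ga gb n a(1,2)]) (use j b in auto)
next
  case False
  then obtain j where j: "a = b + int j" by (metis linorder_linear zle_iff_zadd)
  have "p dvd (W n al be m a - W n al be m b)" unfolding j
    by (rule W_const_aux[OF ga gb n b(1,2)]) (use j a in auto)
  then show ?thesis by (metis dvd_minus_iff minus_diff_eq)
qed

lemma S_as_W:
  "(\<Sum>k<n. al (I - int k) * be (int k - J)) = W n al be (I - J) (I - int n + 1)"
proof -
  have "(\<Sum>k<n. al (I - int k) * be (int k - J)) = (\<Sum>k<n. al (I - int (n - Suc k)) * be (int (n - Suc k) - J))"
    by (rule sum.nat_diff_reindex[symmetric])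
  also have "\<dots> = W n al be (I - J) (I - int n + 1)"
    unfolding W_def by (rule sum.cong) (auto simp: of_nat_diff algebra_simps)
  finally show ?thesis .
qed

lemma S'_as_W:
  "(\<Sum>k<n. be (I - int k) * al (int k - J)) = W n al be (I - J) (- J)"
  unfolding W_def by (rule sum.cong) (auto simp: algebra_simps)

lemma S_gam:
  assumes ga: "goodseq n p pp pm chi al" and gb: "goodseq n p pp pm chi be"
    and I: "0 \<le> I" "I < int n" and J: "0 \<le> J" "J < int n"
  shows "p dvd ((\<Sum>k<n. al (I - int k) * be (int k - J)) - gam n al be (I - J))"
    and "p dvd ((\<Sum>k<n. be (I - int k) * al (int k - J)) - gam n al be (I - J))"
proof -
  have n: "n \<ge> 1" using I by auto
  show "p dvd ((\<Sum>k<n. al (I - int k) * be (int k - J)) - gam n al be (I - J))"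
    unfolding S_as_W gam_def by (rule W_const[OF ga gb n]) (use I J in auto)
  show "p dvd ((\<Sum>k<n. be (I - int k) * al (int k - J)) - gam n al be (I - J))"
    unfolding S'_as_W gam_def by (rule W_const[OF ga gb n]) (use I J in auto)
qed

lemma gam_good:
  assumes ga: "goodseq n p pp pm chi al" and gb: "goodseq n p pp pm chi be"
    and dv: "pp * pm dvd p"
  shows "goodseq n p pp pm chi (gam n al be)"
  unfolding goodseq_def
proof (intro allI impI)
  fix m :: int assume m: "1 \<le> m \<and> m \<le> int n - 1"
  have n: "n \<ge> 1" using m by auto
  obtain n' where n': "n = Suc n'" using n by (cases n) auto
  have GA: "\<And>i. 1 \<le> i \<Longrightarrow> i \<le> int n - 1 \<Longrightarrow> good p pp pm chi (al i) (al (i - int n))"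
    using ga unfolding goodseq_def by auto
  have GB: "\<And>i. 1 \<le> i \<Longrightarrow> i \<le> int n - 1 \<Longrightarrow> good p pp pm chi (be i) (be (i - int n))"
    using gb unfolding goodseq_def by auto
  have g1: "gam n al be m = (\<Sum>k<n. al (int k) * be (m - int k))"
    unfolding gam_def W_def using m by simp
  have g2: "gam n al be (m - int n) = (\<Sum>k<n. al (m - int n + int k) * be (- int k))"
    unfolding gam_def W_def using m by simp
  have d1: "pp dvd gam n al be m"
    unfolding g1
  proof (rule dvd_sum)
    fix k assume k: "k \<in> {..<n}"
    show "pp dvd al (int k) * be (m - int k)"
    proof (cases "k = 0")
      case True then show ?thesis using GB[of m] m unfolding good_def by auto
    next
      case False then show ?thesis using GA[of "int k"] k unfolding good_def by auto
    qed
  qed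
  have d2: "pm dvd gam n al be (m - int n)"
    unfolding g2
  proof (rule dvd_sum)
    fix k assume k: "k \<in> {..<n}"
    show "pm dvd al (m - int n + int k) * be (- int k)"
    proof (cases "k = 0")
      case True then show ?thesis using GA[of m] m unfolding good_def by auto
    next
      case False then show ?thesis using GB[of "int n - int k"] k unfolding good_def by auto
    qed
  qed
  have c1: "p dvd (gam n al be (m - int n) - W n al be (m - int n) (1 - int n))"
    unfolding gam_def by (rule W_const[OF ga gb n]) (use m in auto)
  have e1: "W n al be m 0 = al 0 * be m + (\<Sum>k<n'. al (int k + 1) * be (m - int k - 1))"
    unfolding W_def n' sum.lessThan_Suc_shift by (simp add: algebra_simps)
  have e2: "W n al be (m - int n) (1 - int n) = (\<Sum>k<n'. al (int k + 1 - int n) * be (m - int k - 1)) + al 0 * be (m - int n)"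
    unfolding W_def n' sum.lessThan_Suc by (simp add: algebra_simps)
  have e3: "pm * W n al be m 0 - chi * pp * W n al be (m - int n) (1 - int n)
     = al 0 * (pm * be m - chi * pp * be (m - int n))
       + (\<Sum>k<n'. (pm * al (int k + 1) - chi * pp * al (int k + 1 - int n)) * be (m - int k - 1))"
    unfolding e1 e2 by (simp add: algebra_simps sum_distrib_left sum_subtractf sum.distrib)
  have "p dvd (pm * W n al be m 0 - chi * pp * W n al be (m - int n) (1 - int n))"
    unfolding e3
  proof (rule dvd_add)
    show "p dvd al 0 * (pm * be m - chi * pp * be (m - int n))"
      using GB[of m] m unfolding good_def by auto
    show "p dvd (\<Sum>k<n'. (pm * al (int k + 1) - chi * pp * al (int k + 1 - int n)) * be (m - int k - 1))"
    proof (rule dvd_sum)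
      fix k assume k: "k \<in> {..<n'}"
      have "p dvd (pm * al (int k + 1) - chi * pp * al (int k + 1 - int n))"
        using GA[of "int k + 1"] k n' unfolding good_def by auto
      then show "p dvd (pm * al (int k + 1) - chi * pp * al (int k + 1 - int n)) * be (m - int k - 1)"
        by simp
    qed
  qed
  moreover have "gam n al be m = W n al be m 0" unfolding gam_def using m by simp
  ultimately have X: "p dvd (pm * gam n al be m - chi * pp * W n al be (m - int n) (1 - int n))"
    by simp
  have Y: "p dvd chi * pp * (gam n al be (m - int n) - W n al be (m - int n) (1 - int n))"
    using c1 by (rule dvd_mult)
  have "p dvd (pm * gam n al be m - chi * pp * W n al be (m - int n) (1 - int n)
      - chi * pp * (gam n al be (m - int n) - W n al be (m - int n) (1 - int n)))"
    using X Y by (rule dvd_diff)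
  then have "p dvd (pm * gam n al be m - chi * pp * gam n al be (m - int n))"
    by (simp add: algebra_simps)
  then show "good p pp pm chi (gam n al be m) (gam n al be (m - int n))"
    unfolding good_def using d1 d2 by auto
qed



lemma bt_dim[simp]: "dim_row (block_toeplitz n d A) = n*d" "dim_col (block_toeplitz n d A) = n*d"
  unfolding block_toeplitz_def by auto

lemma bt_index: "r < n*d \<Longrightarrow> c < n*d \<Longrightarrow> block_toeplitz n d A $$ (r,c) = A (int (r div d) - int (c div d)) $$ (r mod d, c mod d)"
  unfolding block_toeplitz_def by auto

lemma div_lt: "r < n*d \<Longrightarrow> r div d < (n::nat)"
  by (simp add: less_mult_imp_div_less)

lemma mod_lt: "r < n*(d::nat) \<Longrightarrow> r mod d < d"
  by (metis mod_less_divisor mult_0_right neq0_conv not_less_zero)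

lemma bt_cong: assumes "\<And>i. - (int n - 1) \<le> i \<Longrightarrow> i \<le> int n - 1 \<Longrightarrow> A i = B i"
  shows "block_toeplitz n d A = block_toeplitz n d B"
proof (rule eq_matI)
  fix r c assume "r < dim_row (block_toeplitz n d B)" "c < dim_col (block_toeplitz n d B)"
  hence rc: "r < n*d" "c < n*d" by auto
  have "r div d < n" "c div d < n" using rc div_lt by auto
  then have "A (int (r div d) - int (c div d)) = B (int (r div d) - int (c div d))"
    by (intro assms) auto
  then show "block_toeplitz n d A $$ (r,c) = block_toeplitz n d B $$ (r,c)"
    using rc by (simp add: bt_index)
qed auto

lemma sum_split_add: fixes a b :: nat shows "(\<Sum>l<a + b. g l) = (\<Sum>l<a. g l) + (\<Sum>s<b. g (a + s))"
  by (induction b) (auto simp: add.assoc)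

lemma sum_split_mult: fixes n d :: nat shows "(\<Sum>l<n*d. g l) = (\<Sum>k<n. \<Sum>s<d. g (k*d + s))"
proof (induction n)
  case 0 then show ?case by simp
next
  case (Suc n)
  have "(\<Sum>l<Suc n * d. g l) = (\<Sum>l<n*d + d. g l)" by (simp add: add.commute)
  also have "\<dots> = (\<Sum>l<n*d. g l) + (\<Sum>s<d. g (n*d + s))" by (rule sum_split_add)
  finally show ?case using Suc by simp
qed

lemma bt_mult_entry:
  assumes A: "\<And>i. A i \<in> carrier_mat d d" and B: "\<And>i. B i \<in> carrier_mat d d"
    and rc: "r < n*d" "c < n*d"
  shows "(block_toeplitz n d A * block_toeplitz n d B) $$ (r,c)
    = (\<Sum>k<n. (A (int (r div d) - int k) * B (int k - int (c div d))) $$ (r mod d, c mod d))"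
proof -
  have d: "d > 0" using rc by (cases d) auto
  have "(block_toeplitz n d A * block_toeplitz n d B) $$ (r,c)
     = (\<Sum>l<n*d. block_toeplitz n d A $$ (r,l) * block_toeplitz n d B $$ (l,c))"
    using rc by (simp add: scalar_prod_def lessThan_atLeast0)
  also have "\<dots> = (\<Sum>k<n. \<Sum>s<d. block_toeplitz n d A $$ (r,k*d+s) * block_toeplitz n d B $$ (k*d+s,c))"
    by (rule sum_split_mult)
  also have "\<dots> = (\<Sum>k<n. (A (int (r div d) - int k) * B (int k - int (c div d))) $$ (r mod d, c mod d))"
  proof (rule sum.cong)
    fix k assume k: "k \<in> {..<n}"
    have kd: "\<And>s. s < d \<Longrightarrow> k*d + s < n*d"
    proof -
      fix s assume "s < d"
      then have "k*d + s < k*d + d" by simp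
      also have "\<dots> = Suc k * d" by simp
      also have "\<dots> \<le> n*d" using k by (intro mult_le_mono1) auto
      finally show "k*d + s < n*d" .
    qed
    have dm: "\<And>s. s < d \<Longrightarrow> (k*d+s) div d = k \<and> (k*d+s) mod d = s" using d by auto
    show "(\<Sum>s<d. block_toeplitz n d A $$ (r,k*d+s) * block_toeplitz n d B $$ (k*d+s,c))
       = (A (int (r div d) - int k) * B (int k - int (c div d))) $$ (r mod d, c mod d)"
      using rc mod_lt[OF rc(1)] mod_lt[OF rc(2)]
      by (simp add: bt_index kd dm scalar_prod_def lessThan_atLeast0 carrier_matD[OF A] carrier_matD[OF B])
  qed simp
  finally show ?thesis .
qed



lemma bt_prod:
  assumes M: "M \<in> carrier_mat d d" and mp: "is_min_poly M p"
    and ga: "goodseq n p pp pm chi al" and gb: "goodseq n p pp pm chi be"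
  shows "block_toeplitz n d (\<lambda>i. poly_mat (al i) M) * block_toeplitz n d (\<lambda>i. poly_mat (be i) M)
           = block_toeplitz n d (\<lambda>i. poly_mat (gam n al be i) M)" (is ?A)
    and "block_toeplitz n d (\<lambda>i. poly_mat (be i) M) * block_toeplitz n d (\<lambda>i. poly_mat (al i) M)
           = block_toeplitz n d (\<lambda>i. poly_mat (gam n al be i) M)" (is ?B)
proof -
  have C: "\<And>x. poly_mat x M \<in> carrier_mat d d" by (rule pm_carrier[OF M])
  {
    fix r c assume rc: "r < n*d" "c < n*d"
    let ?I = "int (r div d)" and ?J = "int (c div d)"
    have I: "0 \<le> ?I" "?I < int n" using div_lt[OF rc(1)] by auto
    have J: "0 \<le> ?J" "?J < int n" using div_lt[OF rc(2)] by auto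
    have md: "r mod d < d" "c mod d < d" using mod_lt rc by auto
    have e1: "(block_toeplitz n d (\<lambda>i. poly_mat (al i) M) * block_toeplitz n d (\<lambda>i. poly_mat (be i) M)) $$ (r,c)
      = block_toeplitz n d (\<lambda>i. poly_mat (gam n al be i) M) $$ (r,c)"
    proof -
      have "(block_toeplitz n d (\<lambda>i. poly_mat (al i) M) * block_toeplitz n d (\<lambda>i. poly_mat (be i) M)) $$ (r,c)
        = (\<Sum>k<n. poly_mat (al (?I - int k) * be (int k - ?J)) M $$ (r mod d, c mod d))"
        by (simp add: bt_mult_entry[OF C C rc] pm_mult[OF M])
      also have "\<dots> = poly_mat (\<Sum>k<n. al (?I - int k) * be (int k - ?J)) M $$ (r mod d, c mod d)"
        by (rule pm_sum_entry[OF M md, symmetric])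
      also have "\<dots> = poly_mat (gam n al be (?I - ?J)) M $$ (r mod d, c mod d)"
        using pm_dvd_eq[OF M mp S_gam(1)[OF ga gb I J]] by simp
      finally show ?thesis using rc by (simp add: bt_index)
    qed
    have e2: "(block_toeplitz n d (\<lambda>i. poly_mat (be i) M) * block_toeplitz n d (\<lambda>i. poly_mat (al i) M)) $$ (r,c)
      = block_toeplitz n d (\<lambda>i. poly_mat (gam n al be i) M) $$ (r,c)"
    proof -
      have "(block_toeplitz n d (\<lambda>i. poly_mat (be i) M) * block_toeplitz n d (\<lambda>i. poly_mat (al i) M)) $$ (r,c)
        = (\<Sum>k<n. poly_mat (be (?I - int k) * al (int k - ?J)) M $$ (r mod d, c mod d))"
        by (simp add: bt_mult_entry[OF C C rc] pm_mult[OF M])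
      also have "\<dots> = poly_mat (\<Sum>k<n. be (?I - int k) * al (int k - ?J)) M $$ (r mod d, c mod d)"
        by (rule pm_sum_entry[OF M md, symmetric])
      also have "\<dots> = poly_mat (gam n al be (?I - ?J)) M $$ (r mod d, c mod d)"
        using pm_dvd_eq[OF M mp S_gam(2)[OF ga gb I J]] by simp
      finally show ?thesis using rc by (simp add: bt_index)
    qed
    note e1 e2
  } note E = this
  show ?A by (rule eq_matI, rule E(1)) auto
  show ?B by (rule eq_matI, rule E(2)) auto
qed



lemma good_of:
  assumes p: "p = pp*pm*q" and u: "p dvd u - pp*a" and v: "p dvd v - pm*a'" and qd: "q dvd a - chi*a'"
  shows "good p pp pm chi u v"
proof -
  obtain r where r: "u - pp*a = p*r" using u by blast
  obtain r' where r': "v - pm*a' = p*r'" using v by blast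
  obtain s where s: "a - chi*a' = q*s" using qd by blast
  have uu: "u = pp*(a + pm*q*r)" using r p by (simp add: algebra_simps)
  have vv: "v = pm*(a' + pp*q*r')" using r' p by (simp add: algebra_simps)
  have "pm*u - chi*pp*v = p*(s + pm*r - chi*pp*r')"
    unfolding uu vv p using s by (simp add: algebra_simps)
  then show ?thesis unfolding good_def uu vv by auto
qed

lemma of_good:
  assumes p: "p = pp*pm*q" and p0: "p \<noteq> 0" and g: "good p pp pm chi u v"
  shows "\<exists>a a'. u = pp*a \<and> v = pm*a' \<and> q dvd a - chi*a'"
proof -
  obtain a a' where a: "u = pp*a" and a': "v = pm*a'" using g unfolding good_def by (auto elim!: dvdE)
  have "p dvd pm*u - chi*pp*v" using g unfolding good_def by auto
  then have "(pp*pm)*q dvd (pp*pm)*(a - chi*a')" unfolding a a' p by (simp add: algebra_simps)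
  moreover have "pp*pm \<noteq> 0" using p p0 by auto
  ultimately have "q dvd a - chi*a'" by simp
  then show ?thesis using a a' by auto
qed

lemma frakB_iff:
  assumes M: "M \<in> carrier_mat d d" and mp: "is_min_poly M p" and dv: "pp * pm dvd p"
  shows "X \<in> frakB n M p pp pm chi \<longleftrightarrow>
    (\<exists>al. X = block_toeplitz n d (\<lambda>i. poly_mat (al i) M) \<and> goodseq n p pp pm chi al)"
proof -
  define q where "q = p div (pp*pm)"
  have pq: "p = pp*pm*q" using dv unfolding q_def by simp
  have p0: "p \<noteq> 0" using mp unfolding is_min_poly_def by auto
  have dM: "dim_row M = d" using M by auto
  show ?thesis
  proof
    assume "X \<in> frakB n M p pp pm chi"
    then obtain A where X: "X = block_toeplitz n d A"
      and inP: "\<And>i. - (int n - 1) \<le> i \<Longrightarrow> i \<le> int n - 1 \<Longrightarrow> A i \<in> poly_algebra M"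
      and cond: "\<And>i. 1 \<le> i \<Longrightarrow> i \<le> int n - 1 \<Longrightarrow>
           (\<exists>ai ain. A i = poly_mat (pp * ai) M \<and> A (i - int n) = poly_mat (pm * ain) M \<and>
                     (p div (pp * pm)) dvd (ai - chi * ain))"
      unfolding frakB_def dM by blast
    define al where "al i = (SOME a. A i = poly_mat a M)" for i
    have alA: "poly_mat (al i) M = A i" if "- (int n - 1) \<le> i" "i \<le> int n - 1" for i
    proof -
      have "\<exists>a. A i = poly_mat a M" using inP[OF that] unfolding poly_algebra_def by auto
      then show ?thesis unfolding al_def by (metis (mono_tags, lifting) someI_ex)
    qed
    have "X = block_toeplitz n d (\<lambda>i. poly_mat (al i) M)"
      unfolding X by (rule bt_cong) (simp add: alA)
    moreover have "goodseq n p pp pm chi al"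
      unfolding goodseq_def
    proof (intro allI impI)
      fix i :: int assume i: "1 \<le> i \<and> i \<le> int n - 1"
      obtain ai ain where a1: "A i = poly_mat (pp * ai) M" and a2: "A (i - int n) = poly_mat (pm * ain) M"
        and qd: "q dvd (ai - chi * ain)" using cond[of i] i unfolding q_def by auto
      have u: "p dvd al i - pp*ai" using alA[of i] i a1 by (intro pm_eq_dvd[OF M mp]) auto
      have v: "p dvd al (i - int n) - pm*ain" using alA[of "i - int n"] i a2 by (intro pm_eq_dvd[OF M mp]) auto
      show "good p pp pm chi (al i) (al (i - int n))" by (rule good_of[OF pq u v qd])
    qed
    ultimately show "\<exists>al. X = block_toeplitz n d (\<lambda>i. poly_mat (al i) M) \<and> goodseq n p pp pm chi al"
      by blast
  next
    assume "\<exists>al. X = block_toeplitz n d (\<lambda>i. poly_mat (al i) M) \<and> goodseq n p pp pm chi al"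
    then obtain al where X: "X = block_toeplitz n d (\<lambda>i. poly_mat (al i) M)" and g: "goodseq n p pp pm chi al"
      by blast
    have "\<forall>i::int. - (int n - 1) \<le> i \<and> i \<le> int n - 1 \<longrightarrow> poly_mat (al i) M \<in> poly_algebra M"
      unfolding poly_algebra_def by auto
    moreover have "\<forall>i::int. 1 \<le> i \<and> i \<le> int n - 1 \<longrightarrow>
           (\<exists>ai ain. poly_mat (al i) M = poly_mat (pp * ai) M \<and> poly_mat (al (i - int n)) M = poly_mat (pm * ain) M \<and>
                     (p div (pp * pm)) dvd (ai - chi * ain))"
    proof (intro allI impI)
      fix i :: int assume i: "1 \<le> i \<and> i \<le> int n - 1"
      then have "good p pp pm chi (al i) (al (i - int n))" using g unfolding goodseq_def by auto
      then obtain a a' where "al i = pp*a" "al (i - int n) = pm*a'" "q dvd a - chi*a'"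
        using of_good[OF pq p0] by blast
      then show "\<exists>ai ain. poly_mat (al i) M = poly_mat (pp * ai) M \<and> poly_mat (al (i - int n)) M = poly_mat (pm * ain) M \<and>
                     (p div (pp * pm)) dvd (ai - chi * ain)" unfolding q_def by auto
    qed
    ultimately show "X \<in> frakB n M p pp pm chi" unfolding frakB_def X dM by blast
  qed
qed



lemma good_add: "good p pp pm chi u v \<Longrightarrow> good p pp pm chi u' v' \<Longrightarrow> good p pp pm chi (u+u') (v+v')"
proof -
  assume g: "good p pp pm chi u v" "good p pp pm chi u' v'"
  have "pm*(u+u') - chi*pp*(v+v') = (pm*u - chi*pp*v) + (pm*u' - chi*pp*v')" by (simp add: algebra_simps)
  then show ?thesis using g unfolding good_def by (auto intro: dvd_add)
qed

lemma good_smult: "good p pp pm chi u v \<Longrightarrow> good p pp pm chi (Polynomial.smult c u) (Polynomial.smult c v)"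
proof -
  assume g: "good p pp pm chi u v"
  have "pm*(Polynomial.smult c u) - chi*pp*(Polynomial.smult c v) = Polynomial.smult c (pm*u - chi*pp*v)" by (simp add: smult_diff_right mult.assoc)
  then show ?thesis using g unfolding good_def by (auto simp: dvd_smult)
qed

lemma bt_add:
  assumes M: "M \<in> carrier_mat d d"
  shows "block_toeplitz n d (\<lambda>i. poly_mat (al i) M) + block_toeplitz n d (\<lambda>i. poly_mat (be i) M)
     = block_toeplitz n d (\<lambda>i. poly_mat (al i + be i) M)"
proof (rule eq_matI)
  fix r c assume "r < dim_row (block_toeplitz n d (\<lambda>i. poly_mat (al i + be i) M))"
    "c < dim_col (block_toeplitz n d (\<lambda>i. poly_mat (al i + be i) M))"
  then have rc: "r < n*d" "c < n*d" by auto
  show "(block_toeplitz n d (\<lambda>i. poly_mat (al i) M) + block_toeplitz n d (\<lambda>i. poly_mat (be i) M)) $$ (r,c)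
     = block_toeplitz n d (\<lambda>i. poly_mat (al i + be i) M) $$ (r,c)"
    using rc mod_lt[OF rc(1)] mod_lt[OF rc(2)] M by (simp add: bt_index pm_add[OF M])
qed auto

lemma bt_smult:
  assumes M: "M \<in> carrier_mat d d"
  shows "k \<cdot>\<^sub>m block_toeplitz n d (\<lambda>i. poly_mat (al i) M)
     = block_toeplitz n d (\<lambda>i. poly_mat (Polynomial.smult k (al i)) M)"
proof (rule eq_matI)
  fix r c assume "r < dim_row (block_toeplitz n d (\<lambda>i. poly_mat (Polynomial.smult k (al i)) M))"
    "c < dim_col (block_toeplitz n d (\<lambda>i. poly_mat (Polynomial.smult k (al i)) M))"
  then have rc: "r < n*d" "c < n*d" by auto
  show "(k \<cdot>\<^sub>m block_toeplitz n d (\<lambda>i. poly_mat (al i) M)) $$ (r,c)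
     = block_toeplitz n d (\<lambda>i. poly_mat (Polynomial.smult k (al i)) M) $$ (r,c)"
    using rc mod_lt[OF rc(1)] mod_lt[OF rc(2)] M by (simp add: bt_index pm_smult[OF M])
qed auto

lemma bt_zero:
  assumes M: "M \<in> carrier_mat d d"
  shows "block_toeplitz n d (\<lambda>i. poly_mat 0 M) = 0\<^sub>m (n*d) (n*d)"
proof (rule eq_matI)
  fix r c assume "r < dim_row (0\<^sub>m (n*d) (n*d) :: 'a mat)" "c < dim_col (0\<^sub>m (n*d) (n*d) :: 'a mat)"
  then have rc: "r < n*d" "c < n*d" by auto
  show "block_toeplitz n d (\<lambda>i. poly_mat 0 M) $$ (r,c) = (0\<^sub>m (n*d) (n*d) :: 'a mat) $$ (r,c)"
    using rc mod_lt[OF rc(1)] mod_lt[OF rc(2)] by (simp add: bt_index pm_zero[OF M])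
qed auto

theorem theorem6p2:
  fixes M :: "complex mat" and d n :: nat and p pp pm chi :: "complex poly"
  assumes "M \<in> carrier_mat d d"
    and "nonderogatory M"
    and "is_min_poly M p"
    and "pp * pm dvd p"
    and "coprime chi p"
  shows "frakB n M p pp pm chi \<subseteq> toeplitz_space n d
    \<and> 0\<^sub>m (n*d) (n*d) \<in> frakB n M p pp pm chi
    \<and> (\<forall>X \<in> frakB n M p pp pm chi. \<forall>Y \<in> frakB n M p pp pm chi. X + Y \<in> frakB n M p pp pm chi)
    \<and> (\<forall>c::complex. \<forall>X \<in> frakB n M p pp pm chi. c \<cdot>\<^sub>m X \<in> frakB n M p pp pm chi)
    \<and> (\<forall>X \<in> frakB n M p pp pm chi. \<forall>Y \<in> frakB n M p pp pm chi. X * Y \<in> frakB n M p pp pm chi)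
    \<and> (\<forall>X \<in> frakB n M p pp pm chi. \<forall>Y \<in> frakB n M p pp pm chi. X * Y = Y * X)"
proof -
  note M = assms(1) and mp = assms(3) and dv = assms(4)
  note iff = frakB_iff[OF M mp dv]
  have s1: "frakB n M p pp pm chi \<subseteq> toeplitz_space n d"
  proof
    fix X assume "X \<in> frakB n M p pp pm chi"
    then obtain al where X: "X = block_toeplitz n d (\<lambda>i. poly_mat (al i) M)" using iff by blast
    show "X \<in> toeplitz_space n d" unfolding toeplitz_space_def X using pm_carrier[OF M] by blast
  qed
  have s2: "0\<^sub>m (n*d) (n*d) \<in> frakB n M p pp pm chi"
    unfolding iff
  proof (intro exI conjI)
    show "0\<^sub>m (n*d) (n*d) = block_toeplitz n d (\<lambda>i. poly_mat ((\<lambda>_. 0) i) M)"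
      using bt_zero[OF M] by simp
    show "goodseq n p pp pm chi (\<lambda>_. 0)" unfolding goodseq_def good_def by simp
  qed
  have s3: "X + Y \<in> frakB n M p pp pm chi" if hX: "X \<in> frakB n M p pp pm chi" and hY: "Y \<in> frakB n M p pp pm chi" for X Y
  proof -
    obtain al where X: "X = block_toeplitz n d (\<lambda>i. poly_mat (al i) M)" and ga: "goodseq n p pp pm chi al"
      using hX unfolding iff by blast
    obtain be where Y: "Y = block_toeplitz n d (\<lambda>i. poly_mat (be i) M)" and gb: "goodseq n p pp pm chi be"
      using hY unfolding iff by blast
    show ?thesis unfolding iff
    proof (intro exI conjI)
      show "X + Y = block_toeplitz n d (\<lambda>i. poly_mat ((\<lambda>i. al i + be i) i) M)"
        unfolding X Y by (simp add: bt_add[OF M])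
      show "goodseq n p pp pm chi (\<lambda>i. al i + be i)"
        unfolding goodseq_def
      proof (intro allI impI)
        fix i :: int assume "1 \<le> i \<and> i \<le> int n - 1"
        then show "good p pp pm chi (al i + be i) (al (i - int n) + be (i - int n))"
          using ga gb unfolding goodseq_def by (intro good_add) auto
      qed
    qed
  qed
  have s4: "c \<cdot>\<^sub>m X \<in> frakB n M p pp pm chi" if hX: "X \<in> frakB n M p pp pm chi" for X c
  proof -
    obtain al where X: "X = block_toeplitz n d (\<lambda>i. poly_mat (al i) M)" and ga: "goodseq n p pp pm chi al"
      using hX unfolding iff by blast
    show ?thesis unfolding iff
    proof (intro exI conjI)
      show "c \<cdot>\<^sub>m X = block_toeplitz n d (\<lambda>i. poly_mat ((\<lambda>i. Polynomial.smult c (al i)) i) M)"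
        unfolding X by (simp add: bt_smult[OF M])
      show "goodseq n p pp pm chi (\<lambda>i. Polynomial.smult c (al i))"
        unfolding goodseq_def
      proof (intro allI impI)
        fix i :: int assume "1 \<le> i \<and> i \<le> int n - 1"
        then show "good p pp pm chi (Polynomial.smult c (al i)) (Polynomial.smult c (al (i - int n)))"
          using ga unfolding goodseq_def by (intro good_smult) auto
      qed
    qed
  qed
  have s5: "X * Y \<in> frakB n M p pp pm chi \<and> X * Y = Y * X"
    if hX: "X \<in> frakB n M p pp pm chi" and hY: "Y \<in> frakB n M p pp pm chi" for X Y
  proof -
    obtain al where X: "X = block_toeplitz n d (\<lambda>i. poly_mat (al i) M)" and ga: "goodseq n p pp pm chi al"
      using hX unfolding iff by blast
    obtain be where Y: "Y = block_toeplitz n d (\<lambda>i. poly_mat (be i) M)" and gb: "goodseq n p pp pm chi be"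
      using hY unfolding iff by blast
    have "X * Y \<in> frakB n M p pp pm chi" unfolding iff
      using bt_prod(1)[OF M mp ga gb] gam_good[OF ga gb dv] unfolding X Y by blast
    moreover have "X * Y = Y * X" unfolding X Y bt_prod[OF M mp ga gb] ..
    ultimately show ?thesis by blast
  qed
  show ?thesis using s1 s2 s3 s4 s5 by blast
qed

end
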